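(* For every positive integer $n$, $M(n,1)\le \frac{1}{n}\left(2^{n+1}-2\right)$.
   Context: A grain pattern of length $n$ is a subset $E\subseteq\{2,\dots,n\}$ containing no two consecutive integers. For such $E$, $\phi_E:\{0,1\}^n\to\{0,1\}^n$ sends $\mathbf{x}$ to $\mathbf{y}$ with $y_j=x_{j-1}$ if $j\in E$ and $y_j=x_j$ otherwise. $\Phi_t(\mathbf{x})=\{\phi_E(\mathbf{x}): E \text{ a grain pattern of length } n,\ |E|\le t\}$. A code $\mathcal{C}\subseteq\{0,1\}^n$ is $t$-grain-correcting if for any two distinct codewords $\mathbf{x}_1,\mathbf{x}_2$ one has $\Phi_t(\mathbf{x}_1)\cap\Phi_t(\mathbf{x}_2)=\emptyset$. $M(n,t)$ is the maximum cardinality of a $t$-grain-correcting code of length $n$. *)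

theory Defs
  imports Complex_Main
begin

text \<open>Binary words of length n are lists of booleans of length n; the word
  x = (x_1,...,x_n) is represented by the list whose entry at index j-1 is x_j.\<close>

definition words :: "nat \<Rightarrow> bool list set" where
  "words n = {x. length x = n}"

definition grain_pattern :: "nat \<Rightarrow> nat set \<Rightarrow> bool" where
  "grain_pattern n E \<longleftrightarrow> E \<subseteq> {2..n} \<and> (\<forall>j\<in>E. Suc j \<notin> E)"

text \<open>phi E x = y with y_j = x_(j-1) for j in E and y_j = x_j otherwise (1-indexed).\<close>
definition phi :: "nat set \<Rightarrow> bool list \<Rightarrow> bool list" where
  "phi E x = map (\<lambda>i. if Suc i \<in> E then x ! (i - 1) else x ! i) [0..<length x]"

definition Phi :: "nat \<Rightarrow> bool list \<Rightarrow> bool list set" where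
  "Phi t x = {phi E x | E. grain_pattern (length x) E \<and> card E \<le> t}"

definition grain_correcting :: "nat \<Rightarrow> nat \<Rightarrow> bool list set \<Rightarrow> bool" where
  "grain_correcting n t C \<longleftrightarrow> C \<subseteq> words n \<and>
     (\<forall>x1\<in>C. \<forall>x2\<in>C. x1 \<noteq> x2 \<longrightarrow> Phi t x1 \<inter> Phi t x2 = {})"

definition M :: "nat \<Rightarrow> nat \<Rightarrow> nat" where
  "M n t = Max (card ` {C. grain_correcting n t C})"

end

theory Submission imports Defs begin

definition bd :: "bool list \<Rightarrow> nat set" where
  "bd x = {i. 0<i \<and> i<length x \<and> x!(i-1) \<noteq> x!i}"

lemma finite_bd: "finite (bd x)"
  by (rule finite_subset[of _ "{..<length x}"]) (auto simp: bd_def)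

lemma phi_empty: "phi {} x = x"
  by (simp add: phi_def map_nth)

lemma length_phi: "length (phi E x) = length x"
  by (simp add: phi_def)

lemma phi_single: "0<i \<Longrightarrow> i<length x \<Longrightarrow> phi {Suc i} x = x[i := x!(i-1)]"
  by (rule nth_equalityI) (auto simp: phi_def nth_list_update)

lemma finite_words: "finite (words n)"
proof -
  have "words n = {xs. set xs \<subseteq> (UNIV::bool set) \<and> length xs = n}" by (auto simp: words_def)
  then show ?thesis using finite_lists_length_eq[of "UNIV::bool set" n] by simp
qed

lemma card_words: "card (words n) = 2^n"
proof -
  have "words n = {xs. set xs \<subseteq> (UNIV::bool set) \<and> length xs = n}" by (auto simp: words_def)
  then show ?thesis using card_lists_length_eq[of "UNIV::bool set" n] by simp
qed

lemma Phi_sub: "Phi 1 x \<subseteq> words (length x)"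
  by (auto simp: Phi_def words_def length_phi)

lemma x_in_Phi: "x \<in> Phi 1 x"
proof -
  have "grain_pattern (length x) {}" by (simp add: grain_pattern_def)
  then show ?thesis unfolding Phi_def using phi_empty[of x] by force
qed

lemma single_in_Phi: assumes "i \<in> bd x" shows "x[i := x!(i-1)] \<in> Phi 1 x"
proof -
  have i: "0<i" "i<length x" using assms by (auto simp: bd_def)
  have "grain_pattern (length x) {Suc i}" using i by (simp add: grain_pattern_def)
  moreover have "card {Suc i} \<le> 1" by simp
  ultimately show ?thesis unfolding Phi_def using phi_single[OF i] by force
qed

lemma card_Phi_lower: "1 + card (bd x) \<le> card (Phi 1 x)"
proof -
  let ?f = "\<lambda>i. x[i := x!(i-1)]"
  have sub: "insert x (?f ` bd x) \<subseteq> Phi 1 x" using x_in_Phi single_in_Phi by auto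
  have fin: "finite (Phi 1 x)" using Phi_sub finite_words finite_subset by blast
  have inj: "inj_on ?f (bd x)"
  proof (rule inj_onI)
    fix i j assume ij: "i \<in> bd x" "j \<in> bd x" "?f i = ?f j"
    show "i = j"
    proof (rule ccontr)
      assume "i \<noteq> j"
      have "?f i ! i = x!(i-1)" using ij(1) by (simp add: bd_def)
      moreover have "?f j ! i = x!i" using \<open>i \<noteq> j\<close> by simp
      ultimately show False using ij by (simp add: bd_def)
    qed
  qed
  have nx: "x \<notin> ?f ` bd x"
  proof
    assume "x \<in> ?f ` bd x"
    then obtain i where i: "i \<in> bd x" "x = ?f i" by blast
    then have "x ! i = ?f i ! i" by simp
    also have "\<dots> = x!(i-1)" using i(1) by (simp add: bd_def)
    finally show False using i(1) by (simp add: bd_def)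
  qed
  have "card (insert x (?f ` bd x)) = 1 + card (bd x)"
    using nx inj finite_bd by (simp add: card_image)
  then show ?thesis using card_mono[OF fin sub] by simp
qed

lemma bd_update: assumes i: "0<i" "i<length x"
  shows "card (bd (x[i := x!(i-1)])) \<le> card (bd x)"
proof (cases "x!(i-1) = x!i")
  case True
  then show ?thesis by simp
next
  case False
  let ?y = "x[i := x!(i-1)]"
  have ib: "i \<in> bd x" using i False by (simp add: bd_def)
  have "bd ?y \<subseteq> (bd x - {i}) \<union> {Suc i}"
  proof
    fix k assume k: "k \<in> bd ?y"
    then have k1: "0<k" "k<length x" "?y!(k-1) \<noteq> ?y!k" by (auto simp: bd_def)
    show "k \<in> (bd x - {i}) \<union> {Suc i}"
    proof (cases "k = i \<or> k = Suc i")
      case True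
      then show ?thesis using k1 i by (auto simp: nth_list_update)
    next
      case False
      then have "k-1 \<noteq> i" using k1 by auto
      then show ?thesis using k1 False by (auto simp: bd_def nth_list_update)
    qed
  qed
  then have "card (bd ?y) \<le> card ((bd x - {i}) \<union> {Suc i})"
    by (rule card_mono[rotated]) (simp add: finite_bd)
  also have "\<dots> \<le> card (bd x - {i}) + 1" using card_Un_le[of "bd x - {i}" "{Suc i}"] by simp
  also have "\<dots> = card (bd x)" using ib finite_bd
    by (simp add: card_Diff_singleton) (metis card_0_eq empty_iff Suc_pred neq0_conv)
  finally show ?thesis .
qed

lemma bd_Phi: assumes "y \<in> Phi 1 x" shows "card (bd y) \<le> card (bd x)"
proof -
  obtain E where E: "y = phi E x" "grain_pattern (length x) E" "card E \<le> 1"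
    using assms by (auto simp: Phi_def)
  have fE: "finite E" using E(2) by (auto simp: grain_pattern_def intro: finite_subset)
  show ?thesis
  proof (cases "card E = 0")
    case True
    then have "E = {}" using fE by simp
    then show ?thesis using E phi_empty by simp
  next
    case False
    then have "card E = 1" using E by simp
    then obtain j where j: "E = {j}" by (auto simp: card_Suc_eq)
    then have j2: "2 \<le> j" "j \<le> length x" using E(2) by (auto simp: grain_pattern_def)
    define i where "i = j - 1"
    have ji: "j = Suc i" "0 < i" "i < length x" using j2 by (auto simp: i_def)
    show ?thesis using E(1) j ji phi_single[OF ji(2,3)] bd_update[OF ji(2,3)] by simp
  qed
qed

lemma choose_frac_sum: "(\<Sum>k\<le>m. real (m choose k) / (1 + real k)) = (2^(m+1) - 1) / (real m + 1)"
proof -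
  have e: "real (m choose k) / (1 + real k) = real (Suc m choose Suc k) / (real m + 1)" for k
  proof -
    have "real (Suc m) * real (m choose k) = real (Suc m choose Suc k) * real (Suc k)"
      using Suc_times_binomial_eq[of m k] by (metis of_nat_mult)
    then show ?thesis by (simp add: field_simps)
  qed
  have "(\<Sum>k\<le>m. real (Suc m choose Suc k)) = 2^(m+1) - 1"
  proof -
    have "(\<Sum>k\<le>Suc m. real (Suc m choose k)) = 2^(Suc m)"
      using choose_row_sum[of "Suc m"] by (metis of_nat_numeral of_nat_power of_nat_sum)
    moreover have "(\<Sum>k\<le>Suc m. real (Suc m choose k)) = 1 + (\<Sum>k\<le>m. real (Suc m choose Suc k))"
      by (subst sum.atMost_Suc_shift) simp
    ultimately show ?thesis by simp
  qed
  then show ?thesis by (simp add: e sum_divide_distrib[symmetric])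
qed

lemma pow_sum:
  assumes "finite A"
  shows "(\<Sum>S\<in>Pow A. 1 / (1 + real (card S))) = (2^(card A+1) - 1) / (real (card A) + 1)"
proof -
  have "(\<Sum>S\<in>Pow A. 1 / (1 + real (card S))) =
     (\<Sum>k\<in>{..card A}. \<Sum>S\<in>{S. S \<in> Pow A \<and> card S = k}. 1 / (1 + real (card S)))"
    by (rule sum.group[symmetric]) (auto simp: assms card_mono)
  also have "\<dots> = (\<Sum>k\<le>card A. real (card A choose k) / (1 + real k))"
  proof (rule sum.cong[OF refl])
    fix k
    have "{S. S \<in> Pow A \<and> card S = k} = {B. B \<subseteq> A \<and> card B = k}" by auto
    then show "(\<Sum>S\<in>{S. S \<in> Pow A \<and> card S = k}. 1 / (1 + real (card S))) =
          real (card A choose k) / (1 + real k)"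
      using n_subsets[OF assms, of k] by simp
  qed
  also have "\<dots> = (2^(card A+1) - 1) / (real (card A) + 1)" by (rule choose_frac_sum)
  finally show ?thesis .
qed

lemma nth_Suc_bd: "Suc i < length y \<Longrightarrow> y!(Suc i) = (if Suc i \<in> bd y then \<not> y!i else y!i)"
  by (auto simp: bd_def)

lemma inj_hd_bd: "inj_on (\<lambda>y. (hd y, bd y)) (words n)"
proof (rule inj_onI)
  fix y z assume y: "y \<in> words n" and z: "z \<in> words n" and e: "(hd y, bd y) = (hd z, bd z)"
  have ly: "length y = n" and lz: "length z = n" using y z by (auto simp: words_def)
  have "\<forall>i. i < n \<longrightarrow> y!i = z!i"
  proof
    fix i show "i < n \<longrightarrow> y!i = z!i"
    proof (induction i)
      case 0
      show ?case
      proof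
        assume "0 < n"
        then have "y \<noteq> []" "z \<noteq> []" using ly lz by auto
        then show "y!0 = z!0" using e hd_conv_nth by (metis prod.inject)
      qed
    next
      case (Suc i)
      then show ?case using e ly lz nth_Suc_bd[of i y] nth_Suc_bd[of i z] by auto
    qed
  qed
  then show "y = z" using ly lz by (auto intro: nth_equalityI)
qed

lemma image_hd_bd: assumes "n \<ge> 1"
  shows "(\<lambda>y. (hd y, bd y)) ` words n = UNIV \<times> Pow {1..<n}"
proof (rule card_subset_eq)
  show "finite ((UNIV::bool set) \<times> Pow {1..<n::nat})" by (intro finite_cartesian_product) (auto simp: UNIV_bool)
  show "(\<lambda>y. (hd y, bd y)) ` words n \<subseteq> UNIV \<times> Pow {1..<n}"
    by (auto simp: bd_def words_def)
  have "card ((\<lambda>y. (hd y, bd y)) ` words n) = 2^n"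
    using card_image[OF inj_hd_bd] card_words by simp
  moreover have "card ((UNIV::bool set) \<times> Pow {1..<n}) = 2^n"
    using assms by (cases n) (simp_all add: card_cartesian_product card_Pow card_UNIV_bool)
  ultimately show "card ((\<lambda>y. (hd y, bd y)) ` words n) = card ((UNIV::bool set) \<times> Pow {1..<n})" by simp
qed

lemma total_weight: assumes "n \<ge> 1"
  shows "(\<Sum>y\<in>words n. 1 / (1 + real (card (bd y)))) = ((2::real) ^ (n + 1) - 2) / real n"
proof -
  let ?h = "\<lambda>y. (hd y, bd y)"
  let ?g = "\<lambda>p::bool \<times> nat set. 1 / (1 + real (card (snd p)))"
  have "(\<Sum>y\<in>words n. 1 / (1 + real (card (bd y)))) = (\<Sum>p\<in>?h ` words n. ?g p)"
    by (simp add: sum.reindex[OF inj_hd_bd])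
  also have "\<dots> = (\<Sum>p\<in>UNIV \<times> Pow {1..<n}. ?g p)" using image_hd_bd[OF assms] by simp
  also have "\<dots> = (\<Sum>b\<in>UNIV. \<Sum>S\<in>Pow {1..<n}. ?g (b,S))"
    by (subst sum.cartesian_product) (simp add: case_prod_unfold)
  also have "\<dots> = 2 * (\<Sum>S\<in>Pow {1..<n}. 1 / (1 + real (card S)))"
    by (simp add: UNIV_bool)
  also have "\<dots> = 2 * ((2^(card {1..<n} + 1) - 1) / (real (card {1..<n}) + 1))"
    by (simp add: pow_sum)
  also have "\<dots> = ((2::real) ^ (n + 1) - 2) / real n"
    using assms by (simp add: of_nat_diff field_simps)
  finally show ?thesis .
qed

theorem corollary3p3:
  fixes n :: nat
  assumes "n \<ge> 1"
  shows "real (M n 1) \<le> ((2::real) ^ (n + 1) - 2) / real n"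
proof -
  let ?Cs = "{C. grain_correcting n 1 C}"
  have finCs: "finite ?Cs"
    by (rule finite_subset[of _ "Pow (words n)"]) (auto simp: grain_correcting_def finite_words)
  have "{} \<in> ?Cs" by (simp add: grain_correcting_def)
  then have "M n 1 \<in> card ` ?Cs" unfolding M_def using finCs by (intro Max_in) auto
  then obtain C where C: "grain_correcting n 1 C" "M n 1 = card C" by auto
  have Cw: "C \<subseteq> words n" and disj: "\<forall>x1\<in>C. \<forall>x2\<in>C. x1 \<noteq> x2 \<longrightarrow> Phi 1 x1 \<inter> Phi 1 x2 = {}"
    using C(1) by (auto simp: grain_correcting_def)
  have finC: "finite C" using Cw finite_words finite_subset by blast
  have lenC: "x \<in> C \<Longrightarrow> length x = n" for x using Cw by (auto simp: words_def)
  have finPhi: "finite (Phi 1 x)" for x using Phi_sub finite_words finite_subset by blast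
  let ?w = "\<lambda>y. 1 / (1 + real (card (bd y)))"
  have "real (card C) = (\<Sum>x\<in>C. (1::real))" by simp
  also have "\<dots> = (\<Sum>x\<in>C. \<Sum>y\<in>Phi 1 x. 1 / real (card (Phi 1 x)))"
  proof (rule sum.cong[OF refl])
    fix x
    have "card (Phi 1 x) > 0" using card_Phi_lower[of x] by simp
    then show "1 = (\<Sum>y\<in>Phi 1 x. 1 / real (card (Phi 1 x)))" by simp
  qed
  also have "\<dots> \<le> (\<Sum>x\<in>C. \<Sum>y\<in>Phi 1 x. ?w y)"
  proof (intro sum_mono)
    fix x y assume y: "y \<in> Phi 1 x"
    have "1 + real (card (bd y)) \<le> real (card (Phi 1 x))"
      using bd_Phi[OF y] card_Phi_lower[of x] by linarith
    then show "1 / real (card (Phi 1 x)) \<le> ?w y"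
      by (intro divide_left_mono) auto
  qed
  also have "\<dots> = (\<Sum>y\<in>(\<Union>x\<in>C. Phi 1 x). ?w y)"
    by (rule sum.UNION_disjoint[symmetric]) (use finC finPhi disj in auto)
  also have "\<dots> \<le> (\<Sum>y\<in>words n. ?w y)"
  proof (rule sum_mono2[OF finite_words])
    show "(\<Union>x\<in>C. Phi 1 x) \<subseteq> words n" using Phi_sub lenC by blast
  qed auto
  also have "\<dots> = ((2::real) ^ (n + 1) - 2) / real n" by (rule total_weight[OF assms])
  finally show ?thesis using C(2) by simp
qed

end
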